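(* Consider a word $uaav$ with $a \in A$ and $|ua| = i$. Then $x_i \neq x_{i+1}$ and $y_i \neq y_{i+1}$.
   Context: $A$ is a finite alphabet. An $\mathsf{X}$-ranker is a nonempty word over $\{\mathsf{X}_a : a\in A\}$ ("go to the next $a$-position", starting with the first $a$-position) and a $\mathsf{Y}$-ranker a nonempty word over $\{\mathsf{Y}_a : a\in A\}$ ("go to the previous $a$-position", starting with the last $a$-position). The attribute of position $i$ is $(x_i,y_i)$, where $x_i$ (resp. $y_i$) is the length of a shortest $\mathsf{X}$-ranker (resp. $\mathsf{Y}$-ranker) reaching $i$. *)

theory Defs
  imports Main
begin

text \<open>Words are lists; positions are 1-indexed: position p (1 \<le> p \<le> length w)
carries the letter w ! (p - 1). A ranker is represented by the list of its letters
(X_b or Y_b is represented by b).\<close>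

fun xrun :: "'a list \<Rightarrow> 'a list \<Rightarrow> nat \<Rightarrow> nat option" where
  "xrun w [] p = Some p"
| "xrun w (b # r) p =
     (if \<exists>q. p < q \<and> q \<le> length w \<and> w ! (q - 1) = b
      then xrun w r (LEAST q. p < q \<and> q \<le> length w \<and> w ! (q - 1) = b)
      else None)"

fun yrun :: "'a list \<Rightarrow> 'a list \<Rightarrow> nat \<Rightarrow> nat option" where
  "yrun w [] p = Some p"
| "yrun w (b # r) p =
     (if \<exists>q. 1 \<le> q \<and> q < p \<and> w ! (q - 1) = b
      then yrun w r (GREATEST q. 1 \<le> q \<and> q < p \<and> w ! (q - 1) = b)
      else None)"

definition x_reaches :: "'a list \<Rightarrow> 'a list \<Rightarrow> nat \<Rightarrow> bool" where
  "x_reaches w r i \<longleftrightarrow> r \<noteq> [] \<and> xrun w r 0 = Some i"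

definition y_reaches :: "'a list \<Rightarrow> 'a list \<Rightarrow> nat \<Rightarrow> bool" where
  "y_reaches w r i \<longleftrightarrow> r \<noteq> [] \<and> yrun w r (length w + 1) = Some i"

definition xattr :: "'a list \<Rightarrow> nat \<Rightarrow> nat" where
  "xattr w i = (LEAST n. \<exists>r. length r = n \<and> x_reaches w r i)"

definition yattr :: "'a list \<Rightarrow> nat \<Rightarrow> nat" where
  "yattr w i = (LEAST n. \<exists>r. length r = n \<and> y_reaches w r i)"

end

theory Submission
  imports Defs
begin

lemma xrun_app: "xrun w (r @ s) p = (case xrun w r p of None \<Rightarrow> None | Some q \<Rightarrow> xrun w s q)"
  by (induction r arbitrary: p) auto

lemma yrun_app: "yrun w (r @ s) p = (case yrun w r p of None \<Rightarrow> None | Some q \<Rightarrow> yrun w s q)"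
  by (induction r arbitrary: p) auto

lemma xrun_single:
  assumes "xrun w [b] p = Some q"
  shows "p < q \<and> q \<le> length w \<and> w ! (q - 1) = b \<and> (\<forall>q'. p < q' \<and> q' < q \<longrightarrow> w ! (q' - 1) \<noteq> b)"
proof -
  let ?P = "\<lambda>q. p < q \<and> q \<le> length w \<and> w ! (q - 1) = b"
  have ex: "\<exists>q. ?P q" and q: "q = (LEAST q. ?P q)" using assms by (auto split: if_splits)
  have "?P q" using LeastI_ex[OF ex] q by simp
  moreover have "\<forall>q'. p < q' \<and> q' < q \<longrightarrow> w ! (q' - 1) \<noteq> b"
    using not_less_Least[of _ ?P] q \<open>?P q\<close> by fastforce
  ultimately show ?thesis by blast
qed

lemma yrun_single:
  assumes "yrun w [b] p = Some q"
  shows "1 \<le> q \<and> q < p \<and> w ! (q - 1) = b \<and> (\<forall>q'. q < q' \<and> q' < p \<longrightarrow> w ! (q' - 1) \<noteq> b)"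
proof -
  let ?P = "\<lambda>q. 1 \<le> q \<and> q < p \<and> w ! (q - 1) = b"
  have ex: "\<exists>q. ?P q" and q: "q = (GREATEST q. ?P q)" using assms by (auto split: if_splits)
  have bd: "\<forall>y. ?P y \<longrightarrow> y \<le> p" by auto
  have "?P q" using GreatestI_ex_nat[of ?P p] ex bd q by auto
  moreover have "\<forall>q'. q < q' \<and> q' < p \<longrightarrow> w ! (q' - 1) \<noteq> b"
  proof (intro allI impI notI)
    fix q' assume h: "q < q' \<and> q' < p" "w ! (q' - 1) = b"
    then have "?P q'" using \<open>?P q\<close> by auto
    then have "q' \<le> q" using Greatest_le_nat[of ?P q' p] bd q by auto
    then show False using h by auto
  qed
  ultimately show ?thesis by blast
qed

lemma xrun_take: "p \<le> length w \<Longrightarrow> xrun w (take p w) 0 = Some p"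
proof (induction p)
  case 0 then show ?case by simp
next
  case (Suc p)
  have t: "take (Suc p) w = take p w @ [w ! p]" using Suc.prems by (simp add: take_Suc_conv_app_nth)
  have l: "(LEAST q. p < q \<and> q \<le> length w \<and> w ! (q - 1) = w ! p) = Suc p"
    by (rule Least_equality) (use Suc.prems in auto)
  have "xrun w [w ! p] p = Some (Suc p)"
    using Suc.prems l by (auto intro: exI[of _ "Suc p"])
  then show ?case using Suc t by (simp add: xrun_app)
qed

lemma yrun_drop: "k \<le> length w \<Longrightarrow> yrun w (rev (drop k w)) (length w + 1) = Some (k + 1)"
proof (induction "length w - k" arbitrary: k)
  case 0 then show ?case by simp
next
  case (Suc n)
  then have k: "k < length w" by auto
  have ih: "yrun w (rev (drop (k+1) w)) (length w + 1) = Some (k + 2)"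
    using Suc.hyps(1)[of "k+1"] Suc.hyps(2) k by auto
  have t: "rev (drop k w) = rev (drop (k+1) w) @ [w ! k]"
    using k by (simp add: Cons_nth_drop_Suc[symmetric])
  have g: "(GREATEST q. 1 \<le> q \<and> q < k + 2 \<and> w ! (q - 1) = w ! k) = k + 1"
    by (rule Greatest_equality) auto
  have "yrun w [w ! k] (k + 2) = Some (k + 1)"
    using g by (auto intro: exI[of _ "k+1"])
  then show ?case using ih t by (simp add: yrun_app)
qed

lemma x_exists: "1 \<le> p \<Longrightarrow> p \<le> length w \<Longrightarrow> \<exists>r. x_reaches w r p"
  using xrun_take[of p w] by (auto simp: x_reaches_def intro!: exI[of _ "take p w"])

lemma y_exists: "1 \<le> p \<Longrightarrow> p \<le> length w \<Longrightarrow> \<exists>r. y_reaches w r p"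
  using yrun_drop[of "p - 1" w] by (auto simp: y_reaches_def intro!: exI[of _ "rev (drop (p - 1) w)"])

theorem lemma19:
  fixes u v :: "'a::finite list" and a :: 'a and i :: nat
  assumes "length (u @ [a]) = i"
  shows "xattr (u @ [a, a] @ v) i \<noteq> xattr (u @ [a, a] @ v) (i + 1)
       \<and> yattr (u @ [a, a] @ v) i \<noteq> yattr (u @ [a, a] @ v) (i + 1)"
proof -
  define w where "w = u @ [a, a] @ v"
  have i: "i = length u + 1" using assms by simp
  have len: "i + 1 \<le> length w" using i w_def by simp
  have wi: "w ! (i - 1) = a" using i w_def by (simp add: nth_append)
  have wi1: "w ! i = a" using i w_def by (simp add: nth_append)
  have X: "xattr w i < xattr w (i + 1)"
  proof -
    have "\<exists>r. length r = xattr w (i+1) \<and> x_reaches w r (i+1)"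
    proof -
      obtain r0 where r0: "x_reaches w r0 (i+1)" using x_exists[of "i+1" w] len by auto
      show ?thesis unfolding xattr_def
        using LeastI[of "\<lambda>n. \<exists>r. length r = n \<and> x_reaches w r (i+1)" "length r0"] r0 by blast
    qed
    then obtain r where rl: "length r = xattr w (i+1)" and r: "x_reaches w r (i+1)" by blast
    then have "r \<noteq> []" by (simp add: x_reaches_def)
    then obtain r' b where rr: "r = r' @ [b]" by (cases r rule: rev_exhaust) auto
    have e: "xrun w (r' @ [b]) 0 = Some (i+1)" using r rr by (simp add: x_reaches_def)
    obtain p where p1: "xrun w r' 0 = Some p" and p2: "xrun w [b] p = Some (i+1)"
    proof (cases "xrun w r' 0")
      case None then show ?thesis using e by (simp only: xrun_app) simp
    next
      case (Some p) then show ?thesis using e that by (simp only: xrun_app) simp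
    qed
    note S = xrun_single[OF p2]
    have "p = i"
    proof (rule ccontr)
      assume "p \<noteq> i"
      then have "p < i" using S by linarith
      then have "w ! (i - 1) \<noteq> b" using S by auto
      moreover have "b = a" using S wi1 by simp
      ultimately show False using wi by simp
    qed
    moreover have "r' \<noteq> []" proof
      assume "r' = []" then show False using p1 \<open>p = i\<close> i by simp
    qed
    ultimately have "x_reaches w r' i" using p1 by (simp add: x_reaches_def)
    then have "xattr w i \<le> length r'" unfolding xattr_def by (auto intro: Least_le)
    then show ?thesis using rl rr by simp
  qed
  have Y: "yattr w (i + 1) < yattr w i"
  proof -
    have "\<exists>r. length r = yattr w i \<and> y_reaches w r i"
    proof -
      obtain r0 where r0: "y_reaches w r0 i" using y_exists[of "i" w] len i by auto
      show ?thesis unfolding yattr_def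
        using LeastI[of "\<lambda>n. \<exists>r. length r = n \<and> y_reaches w r i" "length r0"] r0 by blast
    qed
    then obtain r where rl: "length r = yattr w i" and r: "y_reaches w r i" by blast
    then have "r \<noteq> []" by (simp add: y_reaches_def)
    then obtain r' b where rr: "r = r' @ [b]" by (cases r rule: rev_exhaust) auto
    have e: "yrun w (r' @ [b]) (length w + 1) = Some i" using r rr by (simp add: y_reaches_def)
    obtain p where p1: "yrun w r' (length w + 1) = Some p" and p2: "yrun w [b] p = Some i"
    proof (cases "yrun w r' (length w + 1)")
      case None then show ?thesis using e by (simp only: yrun_app) simp
    next
      case (Some p) then show ?thesis using e that by (simp only: yrun_app) simp
    qed
    note S = yrun_single[OF p2]
    have "p = i + 1"
    proof (rule ccontr)
      assume "p \<noteq> i + 1"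
      then have "i + 1 < p" using S by linarith
      moreover have "\<forall>q'. i < q' \<and> q' < p \<longrightarrow> w ! (q' - 1) \<noteq> b" using S by blast
      then have "i < i + 1 \<and> i + 1 < p \<longrightarrow> w ! (i + 1 - 1) \<noteq> b" by (rule spec)
      ultimately have "w ! (i + 1 - 1) \<noteq> b" by simp
      moreover have "b = a" using S wi by simp
      ultimately show False using wi1 by simp
    qed
    moreover have "r' \<noteq> []" proof
      assume "r' = []" then show False using p1 \<open>p = i + 1\<close> len by simp
    qed
    ultimately have "y_reaches w r' (i+1)" using p1 by (simp add: y_reaches_def)
    then have "yattr w (i+1) \<le> length r'" unfolding yattr_def by (auto intro: Least_le)
    then show ?thesis using rl rr by simp
  qed
  show ?thesis using X Y unfolding w_def by simp
qed
end
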